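(* Consider the impulsive system $\dot S=S(A-S)-\beta_0 IS$, $\dot I=\beta_0 IS-(\sigma+g)I$ for $t\neq nT$, $S(nT)=(1-p)S(nT^-)$, $I(nT)=I(nT^-)$, $n\in\mathbb{N}$. For $T>0$: (1) the disease-free trivial solution $(0,0)$ is locally asymptotically stable provided $p>p_1(T)$; (2) the disease-free periodic solution $(\mathcal{S},0)$ is locally asymptotically stable provided $p_2(T)<p<p_1(T)$, where $p_1(T)=1-e^{-AT}$ and $p_2(T)=1-e^{-(A-S_c)T}$.
   Context: Parameters: $A\in(0,1]$, $\beta_0>0$, $\sigma,g\ge0$ with $\sigma+g>0$, $p\in[0,1]$; $S_c=(\sigma+g)/\beta_0$; it is assumed $S(t)\le A$. $\mathcal{S}$ is the $T$-periodic function given for $nT\le t<(n+1)T$ by $\mathcal{S}(t)=\frac{A[e^{AT}(1-p)-1]}{e^{AT}(1-p)-1+pe^{A(T-(t-nT))}}$. Local asymptotic stability of a $T$-periodic solution through $x_0$: for every neighbourhood $V$ of $x_0$ there is a neighbourhood $W\subset V$ with $\varphi(kT,y_0)\in V$ for all $y_0\in W$, $k\in\mathbb{N}$, and there is a neighbourhood $V$ with $\varphi(kT,y_0)\to x_0$ for all $y_0\in V$. *)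

theory Defs
  imports "HOL-Analysis.Analysis"
begin

text \<open>Solutions of the impulsive SI system on [0,\<infinity>):
  S' = S(A - S) - beta0 I S,  I' = beta0 I S - (sigma + g) I  for t \<noteq> nT,
  S(nT) = (1 - p) S(nT^-),  I(nT) = I(nT^-)  for n \<ge> 1.
  Solutions are right-continuous; the value at t = 0 is the initial state.\<close>

definition impulsive_solution ::
  "real \<Rightarrow> real \<Rightarrow> real \<Rightarrow> real \<Rightarrow> real \<Rightarrow> real \<Rightarrow> (real \<Rightarrow> real) \<Rightarrow> (real \<Rightarrow> real) \<Rightarrow> bool" where
  "impulsive_solution A \<beta>0 \<sigma> g p T S I \<longleftrightarrow>
     (\<forall>n::nat. \<forall>t \<in> {real n * T <..< real (Suc n) * T}.
        (S has_real_derivative (S t * (A - S t) - \<beta>0 * I t * S t)) (at t) \<and>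
        (I has_real_derivative (\<beta>0 * I t * S t - (\<sigma> + g) * I t)) (at t)) \<and>
     (\<forall>n::nat. continuous_on {real n * T ..< real (Suc n) * T} S \<and>
               continuous_on {real n * T ..< real (Suc n) * T} I) \<and>
     (\<forall>n::nat. n \<ge> 1 \<longrightarrow>
        (\<exists>L. (S \<longlongrightarrow> L) (at_left (real n * T)) \<and> S (real n * T) = (1 - p) * L) \<and>
        (I \<longlongrightarrow> I (real n * T)) (at_left (real n * T)))"

definition is_trajectory ::
  "real \<Rightarrow> real \<Rightarrow> real \<Rightarrow> real \<Rightarrow> real \<Rightarrow> real \<Rightarrow> real \<times> real \<Rightarrow> (real \<Rightarrow> real \<times> real) \<Rightarrow> bool" where
  "is_trajectory A \<beta>0 \<sigma> g p T y x \<longleftrightarrow>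
     impulsive_solution A \<beta>0 \<sigma> g p T (\<lambda>t. fst (x t)) (\<lambda>t. snd (x t)) \<and> x 0 = y"

definition state_space :: "(real \<times> real) set" where
  "state_space = {(s, i). 0 \<le> s \<and> 0 \<le> i}"

text \<open>Local asymptotic stability of the T-periodic solution through x0, in terms of the
  stroboscopic map \<phi>(kT, y0), neighbourhoods taken relative to the state space.\<close>
definition loc_asym_stable ::
  "real \<Rightarrow> real \<Rightarrow> real \<Rightarrow> real \<Rightarrow> real \<Rightarrow> real \<Rightarrow> real \<times> real \<Rightarrow> bool" where
  "loc_asym_stable A \<beta>0 \<sigma> g p T x0 \<longleftrightarrow>
     (\<forall>V. open V \<and> x0 \<in> V \<longrightarrow>
        (\<exists>W. open W \<and> x0 \<in> W \<and> W \<subseteq> V \<and>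
           (\<forall>y \<in> W \<inter> state_space. \<forall>x. is_trajectory A \<beta>0 \<sigma> g p T y x \<longrightarrow>
              (\<forall>k::nat. x (real k * T) \<in> V)))) \<and>
     (\<exists>V. open V \<and> x0 \<in> V \<and>
        (\<forall>y \<in> V \<inter> state_space. \<forall>x. is_trajectory A \<beta>0 \<sigma> g p T y x \<longrightarrow>
           (\<lambda>k::nat. x (real k * T)) \<longlonglongrightarrow> x0))"

definition Sper :: "real \<Rightarrow> real \<Rightarrow> real \<Rightarrow> real \<Rightarrow> real" where
  "Sper A p T t = (let n = \<lfloor>t / T\<rfloor> in
     A * (exp (A * T) * (1 - p) - 1) /
       (exp (A * T) * (1 - p) - 1 + p * exp (A * (T - (t - real_of_int n * T)))))"

definition Scrit :: "real \<Rightarrow> real \<Rightarrow> real \<Rightarrow> real" where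
  "Scrit \<beta>0 \<sigma> g = (\<sigma> + g) / \<beta>0"

definition p1 :: "real \<Rightarrow> real \<Rightarrow> real" where
  "p1 A T = 1 - exp (- A * T)"

definition p2 :: "real \<Rightarrow> real \<Rightarrow> real \<Rightarrow> real \<Rightarrow> real \<Rightarrow> real" where
  "p2 A \<beta>0 \<sigma> g T = 1 - exp (- (A - Scrit \<beta>0 \<sigma> g) * T)"

end

theory Submission
  imports Defs "HOL-Analysis.Analysis"
begin


lemma comp_le:
  fixes f f' :: "real \<Rightarrow> real"
  assumes "a \<le> t" "t \<le> b" "continuous_on {a..b} f"
    and d: "\<And>x. a < x \<Longrightarrow> x < b \<Longrightarrow> (f has_real_derivative f' x) (at x)"
    and le: "\<And>x. a < x \<Longrightarrow> x < b \<Longrightarrow> f' x \<le> k * f x"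
  shows "f t \<le> f a * exp (k * (t - a))"
proof (cases "t = a")
  case True then show ?thesis by simp
next
  case False
  then have at: "a < t" using assms(1) by simp
  define h where "h x = f x * exp (- k * (x - a))" for x
  have hd: "(h has_real_derivative (f' x - k * f x) * exp (- k * (x - a))) (at x)"
    if "a < x" "x < b" for x
    unfolding h_def using d[OF that]
    by (auto intro!: derivative_eq_intros simp: algebra_simps)
  have hc: "continuous_on {a..t} h"
    unfolding h_def
    by (intro continuous_intros continuous_on_subset[OF assms(3)]) (use assms in auto)
  obtain l z where z: "a < z" "z < t" "DERIV h z :> l" "h t - h a = (t - a) * l"
    using MVT[OF at hc] hd assms(2) by (metis less_le_trans real_differentiable_def)
  have "l = (f' z - k * f z) * exp (- k * (z - a))"
    using DERIV_unique[OF z(3) hd] z assms(2) by auto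
  also have "\<dots> \<le> 0" using le[of z] z assms(2) by (simp add: mult_nonpos_nonneg)
  finally have "h t \<le> h a" using z(4) at by (smt (verit) mult_nonneg_nonpos)
  then have "f t * exp (- k * (t - a)) \<le> f a" by (simp add: h_def)
  then have "f t * exp (- k * (t - a)) * exp (k * (t - a)) \<le> f a * exp (k * (t - a))"
    by (simp add: mult_right_mono)
  then show ?thesis by (simp add: mult.assoc flip: exp_add)
qed

lemma comp_ge:
  fixes f f' :: "real \<Rightarrow> real"
  assumes "a \<le> t" "t \<le> b" "continuous_on {a..b} f"
    and d: "\<And>x. a < x \<Longrightarrow> x < b \<Longrightarrow> (f has_real_derivative f' x) (at x)"
    and le: "\<And>x. a < x \<Longrightarrow> x < b \<Longrightarrow> f' x \<ge> k * f x"
  shows "f t \<ge> f a * exp (k * (t - a))"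
proof -
  have "- f t \<le> - f a * exp (k * (t - a))"
    using comp_le[of a t b "\<lambda>x. - f x" "\<lambda>x. - f' x" k] assms
    by (auto intro!: continuous_intros derivative_intros)
  then show ?thesis by simp
qed



lemma sign_sq:
  fixes f c :: "real \<Rightarrow> real"
  assumes "a \<le> b" "continuous_on {a..b} f" "continuous_on {a..b} c"
    and d: "\<And>x. a < x \<Longrightarrow> x < b \<Longrightarrow> (f has_real_derivative c x * f x) (at x)"
  shows "\<exists>M. \<forall>t\<in>{a..b}. (f t)^2 \<le> (f a)^2 * exp (2*M*(t-a)) \<and> (f t)^2 \<ge> (f a)^2 * exp (-2*M*(t-a))"
proof -
  have "bounded (c ` {a..b})"
    by (intro compact_imp_bounded compact_continuous_image assms) auto
  then obtain M where M0: "\<forall>y\<in>c ` {a..b}. norm y \<le> M" unfolding bounded_iff by blast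
  then have M: "\<And>x. x \<in> {a..b} \<Longrightarrow> \<bar>c x\<bar> \<le> M" by auto
  have d2: "((\<lambda>x. (f x)^2) has_real_derivative 2 * c x * (f x)^2) (at x)" if "a < x" "x < b" for x
    using d[OF that] by (auto intro!: derivative_eq_intros simp: power2_eq_square)
  have cont: "continuous_on {a..b} (\<lambda>x. (f x)^2)" by (intro continuous_intros assms)
  show ?thesis
  proof (intro exI ballI conjI)
    fix t assume t: "t \<in> {a..b}"
    have "2 * c x * (f x)^2 \<le> (2*M) * (f x)^2" if "a < x" "x < b" for x
      using M[of x] that by (intro mult_right_mono) auto
    then show "(f t)^2 \<le> (f a)^2 * exp (2*M*(t-a))"
      using t by (intro comp_le[OF _ _ cont d2]) auto
    have "2 * c x * (f x)^2 \<ge> (-2*M) * (f x)^2" if "a < x" "x < b" for x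
      using M[of x] that by (intro mult_right_mono) auto
    then show "(f t)^2 \<ge> (f a)^2 * exp (-2*M*(t-a))"
      using t by (intro comp_ge[OF _ _ cont d2]) auto
  qed
qed

lemma sign_pres:
  fixes f c :: "real \<Rightarrow> real"
  assumes "a \<le> b" "continuous_on {a..b} f" "continuous_on {a..b} c"
    and d: "\<And>x. a < x \<Longrightarrow> x < b \<Longrightarrow> (f has_real_derivative c x * f x) (at x)"
    and t: "t \<in> {a..b}"
  shows sign_pos: "f a > 0 \<Longrightarrow> f t > 0" and sign_nonneg: "f a \<ge> 0 \<Longrightarrow> f t \<ge> 0"
proof -
  obtain M where M: "\<And>t. t\<in>{a..b} \<Longrightarrow> (f t)^2 \<le> (f a)^2 * exp (2*M*(t-a)) \<and> (f t)^2 \<ge> (f a)^2 * exp (-2*M*(t-a))"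
    using sign_sq[OF assms(1-4)] by blast
  have nz: "f x \<noteq> 0" if "f a \<noteq> 0" "x \<in> {a..b}" for x
  proof -
    have "(f a)^2 * exp (-2*M*(x-a)) > 0" using that(1) by simp
    then have "(f x)^2 > 0" using M[OF that(2)] by linarith
    then show ?thesis by auto
  qed
  show pos: "f t > 0" if fa: "f a > 0"
  proof (rule ccontr)
    assume "\<not> f t > 0"
    moreover have "continuous_on {a..t} f" by (rule continuous_on_subset[OF assms(2)]) (use t in auto)
    ultimately obtain z where "a \<le> z" "z \<le> t" "f z = 0"
      using IVT2'[of f t 0 a] less_imp_le[OF fa] t by auto
    then show False using nz[of z] fa t by auto
  qed
  show "f t \<ge> 0" if "f a \<ge> 0"
  proof (cases "f a = 0")
    case True
    then have "(f t)^2 \<le> 0" using M[OF t] by simp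
    then show ?thesis by simp
  next
    case False
    then have "f a > 0" using that by simp
    then show ?thesis using pos by (simp add: less_imp_le)
  qed
qed

lemma ext_cont:
  fixes f :: "real \<Rightarrow> real"
  assumes "a < b" "continuous_on {a..<b} f" "(f \<longlongrightarrow> L) (at_left b)"
  shows "continuous_on {a..b} (\<lambda>t. if t = b then L else f t)"
proof (rule continuous_on_IccI[OF _ _ _ assms(1)])
  obtain c where c: "a < c" "c < b" using assms(1) dense by blast
  have "continuous_on {a..c} f" by (rule continuous_on_subset[OF assms(2)]) (use c in auto)
  then have "(f \<longlongrightarrow> f a) (at_right a)" using continuous_on_Icc_at_rightD c by blast
  moreover have "eventually (\<lambda>t. f t = (if t = b then L else f t)) (at_right a)"
    unfolding eventually_at_right_field using assms(1) by (intro exI[of _ b]) auto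
  ultimately show "((\<lambda>t. if t = b then L else f t) \<longlongrightarrow> (if a = b then L else f a)) (at_right a)"
    using assms(1) Lim_transform_eventually by fastforce
next
  have "eventually (\<lambda>t. f t = (if t = b then L else f t)) (at_left b)"
    by (simp add: eventually_at_filter)
  then show "((\<lambda>t. if t = b then L else f t) \<longlongrightarrow> (if b = b then L else f b)) (at_left b)"
    using assms(3) Lim_transform_eventually by fastforce
next
  fix x assume x: "a < x" "x < b"
  have "continuous_on {a<..<b} f" by (rule continuous_on_subset[OF assms(2)]) auto
  then have "(f \<longlongrightarrow> f x) (at x within {a<..<b})" using x by (simp add: continuous_on_def)
  then have lim: "(f \<longlongrightarrow> f x) (at x)" using at_within_open[of x "{a<..<b}"] x by simp
  have "eventually (\<lambda>t. t < b) (at x)" using order_tendstoD(2)[OF tendsto_ident_at x(2)] by simp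
  then have "eventually (\<lambda>t. f t = (if t = b then L else f t)) (at x)"
    by (rule eventually_mono) auto
  from Lim_transform_eventually[OF lim this]
  show "((\<lambda>t. if t = b then L else f t) \<longlongrightarrow> (if x = b then L else f x)) (at x)"
    using x by simp
qed



locale period =
  fixes A \<beta>0 \<sigma> g :: real and s i :: "real \<Rightarrow> real" and a b :: real
  assumes ab: "a < b" and pos: "0 < A" "0 < \<beta>0" "0 \<le> \<sigma> + g"
    and cs: "continuous_on {a..b} s" and ci: "continuous_on {a..b} i"
    and ds: "\<And>t. a < t \<Longrightarrow> t < b \<Longrightarrow> (s has_real_derivative s t * (A - s t) - \<beta>0 * i t * s t) (at t)"
    and di: "\<And>t. a < t \<Longrightarrow> t < b \<Longrightarrow> (i has_real_derivative \<beta>0 * i t * s t - (\<sigma> + g) * i t) (at t)"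
begin

lemma ds': "a < t \<Longrightarrow> t < b \<Longrightarrow> (s has_real_derivative (A - s t - \<beta>0 * i t) * s t) (at t)"
  by (rule DERIV_cong[OF ds]) (auto simp: algebra_simps)
lemma di': "a < t \<Longrightarrow> t < b \<Longrightarrow> (i has_real_derivative (\<beta>0 * s t - (\<sigma> + g)) * i t) (at t)"
  by (rule DERIV_cong[OF di]) (auto simp: algebra_simps)

lemma s_pos: "s a > 0 \<Longrightarrow> t \<in> {a..b} \<Longrightarrow> s t > 0"
  by (rule sign_pos[of a b s "\<lambda>t. A - s t - \<beta>0 * i t", OF _ cs _ ds']) (use ab in \<open>auto intro!: continuous_intros cs ci\<close>)
lemma s_nonneg: "s a \<ge> 0 \<Longrightarrow> t \<in> {a..b} \<Longrightarrow> s t \<ge> 0"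
  by (rule sign_nonneg[of a b s "\<lambda>t. A - s t - \<beta>0 * i t", OF _ cs _ ds']) (use ab in \<open>auto intro!: continuous_intros cs ci\<close>)
lemma i_nonneg: "i a \<ge> 0 \<Longrightarrow> t \<in> {a..b} \<Longrightarrow> i t \<ge> 0"
  by (rule sign_nonneg[of a b i "\<lambda>t. \<beta>0 * s t - (\<sigma> + g)", OF _ ci _ di']) (use ab in \<open>auto intro!: continuous_intros cs ci\<close>)

lemma s_exp:
  assumes "s a \<ge> 0" "i a \<ge> 0" "t \<in> {a..b}"
  shows "s t \<le> s a * exp (A * (t - a))"
proof (rule comp_le[of a t b s _ A, OF _ _ cs ds])
  fix x assume x: "a < x" "x < b"
  have "s x \<ge> 0" "i x \<ge> 0" using s_nonneg i_nonneg assms x by auto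
  then show "s x * (A - s x) - \<beta>0 * i x * s x \<le> A * s x"
    using pos by (simp add: algebra_simps)
qed (use assms in auto)

lemma i_decay:
  assumes "s a \<ge> 0" "i a \<ge> 0" "t \<in> {a..b}" "\<beta>0 * s a * exp (A * (b - a)) \<le> (\<sigma> + g) / 2"
  shows "i t \<le> i a * exp (- ((\<sigma> + g) / 2) * (t - a))"
proof (rule comp_le[of a t b i _, OF _ _ ci di])
  fix x assume x: "a < x" "x < b"
  have ix: "i x \<ge> 0" using i_nonneg assms x by auto
  have "s x \<le> s a * exp (A * (x - a))" using s_exp assms x by auto
  also have "\<dots> \<le> s a * exp (A * (b - a))" using assms x pos by (intro mult_left_mono) auto
  finally have hb: "\<beta>0 * s x \<le> (\<sigma> + g) / 2" using assms(4) pos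
    by (smt (verit, best) mult_left_mono mult.assoc)
  then have "(\<beta>0 * s x - (\<sigma> + g)) * i x \<le> (- ((\<sigma> + g) / 2)) * i x"
    using ix hb by (intro mult_right_mono) (auto simp: field_simps)
  then show "\<beta>0 * i x * s x - (\<sigma> + g) * i x \<le> - ((\<sigma> + g) / 2) * i x"
    by (simp add: algebra_simps)
qed (use assms in auto)


lemma w_deriv:
  assumes "s a > 0" "a < x" "x < b"
  shows "((\<lambda>t. 1 / s t - c) has_real_derivative (- A / s x + 1 + \<beta>0 * i x / s x)) (at x)"
proof -
  have sx: "s x > 0" using s_pos assms by auto
  show ?thesis
    using ds[OF assms(2,3)] sx
    by (auto intro!: derivative_eq_intros simp: field_simps power2_eq_square)
qed

lemma w_cont: "s a > 0 \<Longrightarrow> continuous_on {a..b} (\<lambda>t. 1 / s t - c)"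
  by (intro continuous_intros cs) (use s_pos in force)

lemma w_lower:
  assumes "s a > 0" "i a \<ge> 0" "t \<in> {a..b}"
  shows "1 / s t - 1 / A \<ge> (1 / s a - 1 / A) * exp (- A * (t - a))"
proof (rule comp_ge[of a t b _ _ "- A", OF _ _ w_cont[OF assms(1)] w_deriv[OF assms(1)]])
  fix x assume x: "a < x" "x < b"
  have "s x > 0" "i x \<ge> 0" using s_pos i_nonneg assms x by auto
  then have "\<beta>0 * i x / s x \<ge> 0" using pos by simp
  then show "- A / s x + 1 + \<beta>0 * i x / s x \<ge> - A * (1 / s x - 1 / A)"
    using pos by (simp add: field_simps)
qed (use assms in auto)

lemma s_le_max:
  assumes "s a > 0" "i a \<ge> 0" "t \<in> {a..b}"
  shows "s t \<le> max A (s a)"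
proof -
  have st: "s t > 0" using s_pos assms by auto
  have e: "exp (- A * (t - a)) \<le> 1" "exp (- A * (t - a)) > 0" using pos assms by auto
  have wl: "1 / s t - 1 / A \<ge> (1 / s a - 1 / A) * exp (- A * (t - a))" by (rule w_lower[OF assms])
  show ?thesis
  proof (cases "1 / s a - 1 / A \<ge> 0")
    case True
    then have "1 / s t - 1 / A \<ge> 0" using wl e by (smt (verit) mult_nonneg_nonneg)
    then have "s t \<le> A" using st pos by (simp add: field_simps)
    then show ?thesis by simp
  next
    case False
    then have "(1 / s a - 1 / A) * exp (- A * (t - a)) \<ge> (1 / s a - 1 / A)"
      using e by (smt (verit) mult_le_cancel_left1)
    then have "1 / s t \<ge> 1 / s a" using wl by simp
    then have "s t \<le> s a" using st assms(1) by (simp add: field_simps)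
    then show ?thesis by simp
  qed
qed

lemma i_growth:
  assumes "s a > 0" "i a \<ge> 0" "t \<in> {a..b}"
  shows "i t \<le> i a * exp (\<beta>0 * max A (s a) * (t - a))"
proof (rule comp_le[of a t b i _, OF _ _ ci di])
  fix x assume x: "a < x" "x < b"
  have ix: "i x \<ge> 0" using i_nonneg assms x by auto
  have "s x \<le> max A (s a)" using s_le_max assms x by auto
  then have hb: "\<beta>0 * s x - (\<sigma> + g) \<le> \<beta>0 * max A (s a)" using pos by (smt (verit) mult_left_mono)
  have "(\<beta>0 * s x - (\<sigma> + g)) * i x \<le> (\<beta>0 * max A (s a)) * i x"
    by (rule mult_right_mono[OF hb ix])
  then show "\<beta>0 * i x * s x - (\<sigma> + g) * i x \<le> \<beta>0 * max A (s a) * i x"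
    by (simp add: algebra_simps)
qed (use assms in auto)

lemma V_decay:
  assumes "s a > 0" "i a \<ge> 0"
  shows "i b * s b powr \<beta>0 \<le> i a * s a powr \<beta>0 * exp ((\<beta>0 * A - (\<sigma> + g)) * (b - a))"
proof (rule comp_le[of a b b "\<lambda>t. i t * s t powr \<beta>0" _ "\<beta>0 * A - (\<sigma> + g)"])
  show "continuous_on {a..b} (\<lambda>t. i t * s t powr \<beta>0)"
    by (intro continuous_intros cs ci) (use s_pos assms in force)
  fix x assume x: "a < x" "x < b"
  have sx: "s x > 0" and ix: "i x \<ge> 0" using s_pos i_nonneg assms x by auto
  have eq: "s x powr (\<beta>0 - 1) = s x powr \<beta>0 / s x" using sx by (simp add: powr_diff)
  show "((\<lambda>t. i t * s t powr \<beta>0) has_real_derivative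
      (\<beta>0 * A - (\<sigma> + g) - \<beta>0 * \<beta>0 * i x) * (i x * s x powr \<beta>0)) (at x)"
    using ds[OF x] di[OF x] sx
    by (auto intro!: derivative_eq_intros simp: eq field_simps)
  have "0 \<le> \<beta>0 * \<beta>0 * i x * (i x * s x powr \<beta>0)" using ix pos by simp
  then show "(\<beta>0 * A - (\<sigma> + g) - \<beta>0 * \<beta>0 * i x) * (i x * s x powr \<beta>0)
      \<le> (\<beta>0 * A - (\<sigma> + g)) * (i x * s x powr \<beta>0)" by (simp add: algebra_simps)
qed (use ab in auto)

lemma u_bound:
  assumes "s a > 0" "i a \<ge> 0" "\<And>t. t \<in> {a..b} \<Longrightarrow> \<beta>0 * i t \<le> A / 2" "t \<in> {a..b}"
  shows "1 / s t \<le> max (1 / s a) (2 / A)"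
proof -
  have "1 / s t - 2 / A \<le> (1 / s a - 2 / A) * exp (- (A / 2) * (t - a))"
  proof (rule comp_le[of a t b _ _ "- (A / 2)", OF _ _ w_cont[OF assms(1)] w_deriv[OF assms(1)]])
    fix x assume x: "a < x" "x < b"
    have sx: "s x > 0" using s_pos assms x by auto
    have "\<beta>0 * i x \<le> A / 2" using assms(3)[of x] x by auto
    then have "\<beta>0 * i x / s x \<le> (A / 2) / s x" using sx by (intro divide_right_mono) auto
    then show "- A / s x + 1 + \<beta>0 * i x / s x \<le> - (A / 2) * (1 / s x - 2 / A)"
      using pos sx by (simp add: field_simps)
  qed (use assms in auto)
  moreover have "exp (- (A / 2) * (t - a)) \<le> 1" "exp (- (A / 2) * (t - a)) > 0" using pos assms by auto
  moreover have "(1 / s a - 2 / A) * exp (- (A / 2) * (t - a)) \<le> max (1 / s a - 2 / A) 0"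
  proof (cases "1 / s a - 2 / A \<ge> 0")
    case True
    then have "(1 / s a - 2 / A) * exp (- (A / 2) * (t - a)) \<le> (1 / s a - 2 / A) * 1"
      using calculation(2) by (intro mult_left_mono) auto
    then show ?thesis by simp
  next
    case False
    then have "(1 / s a - 2 / A) * exp (- (A / 2) * (t - a)) \<le> 0"
      using calculation(3) by (intro mult_nonpos_nonneg) auto
    then show ?thesis by simp
  qed
  ultimately have "1 / s t - 2 / A \<le> max (1 / s a - 2 / A) 0" by linarith
  then show ?thesis by linarith
qed

lemma w_upper:
  assumes "s a > 0" "i a \<ge> 0" "Imx \<ge> 0" "\<And>t. t \<in> {a..b} \<Longrightarrow> i t \<le> Imx \<and> 1 / s t \<le> Umx"
  shows "1 / s b - 1 / A \<le> (1 / s a - 1 / A) * exp (- A * (b - a)) + \<beta>0 * Imx * Umx / A"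
proof -
  define d where "d = \<beta>0 * Imx * Umx / A"
  have "1 / s b - (1 / A + d) \<le> (1 / s a - (1 / A + d)) * exp (- A * (b - a))"
  proof (rule comp_le[of a b b _ _ "- A", OF _ _ w_cont[OF assms(1)] w_deriv[OF assms(1)]])
    fix x assume x: "a < x" "x < b"
    have sx: "s x > 0" and ix: "i x \<ge> 0" using s_pos i_nonneg assms x by auto
    have "i x * (1 / s x) \<le> Imx * Umx" using assms(4)[of x] x sx ix by (intro mult_mono) auto
    then have "\<beta>0 * (i x * (1 / s x)) \<le> \<beta>0 * (Imx * Umx)" using pos by (intro mult_left_mono) auto
    then have "\<beta>0 * i x / s x \<le> \<beta>0 * Imx * Umx" by (simp add: mult.assoc)
    then show "- A / s x + 1 + \<beta>0 * i x / s x \<le> - A * (1 / s x - (1 / A + d))"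
      using pos sx by (simp add: d_def field_simps)
  qed (use ab in auto)
  moreover have "d \<ge> 0"
  proof -
    have "Umx \<ge> 1 / s a" using assms(4)[of a] ab by auto
    then have "Umx \<ge> 0" using assms(1) by (smt (verit) divide_pos_pos)
    then show ?thesis using pos assms(3) by (simp add: d_def)
  qed
  moreover have "exp (- A * (b - a)) > 0" by simp
  ultimately have "1 / s b - 1 / A \<le> (1 / s a - 1 / A) * exp (- A * (b - a)) + d - d * exp (- A * (b - a))"
    by (simp add: algebra_simps)
  moreover have "d * exp (- A * (b - a)) \<ge> 0" using \<open>d \<ge> 0\<close> by simp
  ultimately show ?thesis unfolding d_def by linarith
qed

end


lemma traj_period:
  fixes x :: "real \<Rightarrow> real \<times> real" and n :: nat and A \<beta>0 \<sigma> g p T :: real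
  assumes tr: "is_trajectory A \<beta>0 \<sigma> g p T y x" and T: "T > 0"
    and pos: "0 < A" "0 < \<beta>0" "0 \<le> \<sigma> + g"
  obtains L where
    "period A \<beta>0 \<sigma> g (\<lambda>t. if t = real (Suc n) * T then L else fst (x t)) (\<lambda>t. snd (x t))
        (real n * T) (real (Suc n) * T)"
    "fst (x (real (Suc n) * T)) = (1 - p) * L"
proof -
  define a b where "a = real n * T" and "b = real (Suc n) * T"
  have ab: "a < b" using T by (simp add: a_def b_def algebra_simps)
  have sol: "impulsive_solution A \<beta>0 \<sigma> g p T (\<lambda>t. fst (x t)) (\<lambda>t. snd (x t))"
    using tr by (simp add: is_trajectory_def)
  note sol = sol[unfolded impulsive_solution_def]
  obtain L where L: "((\<lambda>t. fst (x t)) \<longlongrightarrow> L) (at_left b)" "fst (x b) = (1 - p) * L"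
    and Ilim: "((\<lambda>t. snd (x t)) \<longlongrightarrow> snd (x b)) (at_left b)"
    using sol[THEN conjunct2, THEN conjunct2, rule_format, of "Suc n"] unfolding b_def by auto
  have cS: "continuous_on {a..<b} (\<lambda>t. fst (x t))" and cI: "continuous_on {a..<b} (\<lambda>t. snd (x t))"
    using sol[THEN conjunct2, THEN conjunct1, rule_format, of n] unfolding a_def b_def by auto
  have cS': "continuous_on {a..b} (\<lambda>t. if t = b then L else fst (x t))"
    by (rule ext_cont[OF ab cS L(1)])
  have cI': "continuous_on {a..b} (\<lambda>t. if t = b then snd (x b) else snd (x t))"
    by (rule ext_cont[OF ab cI Ilim])
  have eqI: "(\<lambda>t. if t = b then snd (x b) else snd (x t)) = (\<lambda>t. snd (x t))" by auto
  have der: "((\<lambda>t. fst (x t)) has_real_derivative fst (x t) * (A - fst (x t)) - \<beta>0 * snd (x t) * fst (x t)) (at t) \<and>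
        ((\<lambda>t. snd (x t)) has_real_derivative \<beta>0 * snd (x t) * fst (x t) - (\<sigma> + g) * snd (x t)) (at t)"
    if "a < t" "t < b" for t
    using spec[OF sol[THEN conjunct1], of n] that unfolding a_def b_def by auto
  have "period A \<beta>0 \<sigma> g (\<lambda>t. if t = b then L else fst (x t)) (\<lambda>t. snd (x t)) a b"
  proof
    show "continuous_on {a..b} (\<lambda>t. snd (x t))" using cI'[unfolded eqI] .
    fix t assume t: "a < t" "t < b"
    have ev: "\<And>z. z \<in> {a<..<b} \<Longrightarrow> fst (x z) = (if z = b then L else fst (x z))" by auto
    show "((\<lambda>t. if t = b then L else fst (x t)) has_real_derivative
        (if t = b then L else fst (x t)) * (A - (if t = b then L else fst (x t))) - \<beta>0 * snd (x t) * (if t = b then L else fst (x t))) (at t)"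
      using has_field_derivative_transform_within_open[OF der[OF t, THEN conjunct1] open_greaterThanLessThan _ ev] t by auto
    show "((\<lambda>t. snd (x t)) has_real_derivative \<beta>0 * snd (x t) * (if t = b then L else fst (x t)) - (\<sigma> + g) * snd (x t)) (at t)"
      using der[OF t] t by auto
  qed (use ab pos cS' in auto)
  then show ?thesis using that L(2) unfolding a_def b_def by blast
qed


lemma step1:
  fixes x :: "real \<Rightarrow> real \<times> real" and n :: nat and A \<beta>0 \<sigma> g p T :: real
  assumes tr: "is_trajectory A \<beta>0 \<sigma> g p T y x" and T: "T > 0"
    and pos: "0 < A" "0 < \<beta>0" "0 \<le> \<sigma> + g" and p: "0 \<le> p" "p \<le> 1"
    and s0: "fst (x (real n * T)) \<ge> 0" and i0: "snd (x (real n * T)) \<ge> 0"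
  shows "fst (x (real (Suc n) * T)) \<ge> 0 \<and> snd (x (real (Suc n) * T)) \<ge> 0 \<and>
    fst (x (real (Suc n) * T)) \<le> (1 - p) * exp (A * T) * fst (x (real n * T)) \<and>
    (\<beta>0 * fst (x (real n * T)) * exp (A * T) \<le> (\<sigma> + g) / 2 \<longrightarrow>
       snd (x (real (Suc n) * T)) \<le> exp (- ((\<sigma> + g) / 2) * T) * snd (x (real n * T)))"
proof -
  obtain L where P: "period A \<beta>0 \<sigma> g (\<lambda>t. if t = real (Suc n) * T then L else fst (x t)) (\<lambda>t. snd (x t))
        (real n * T) (real (Suc n) * T)" and L: "fst (x (real (Suc n) * T)) = (1 - p) * L"
    using traj_period[OF tr T pos] by blast
  interpret P: period A \<beta>0 \<sigma> g "\<lambda>t. if t = real (Suc n) * T then L else fst (x t)" "\<lambda>t. snd (x t)"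
        "real n * T" "real (Suc n) * T" by (rule P)
  have ba: "real (Suc n) * T - real n * T = T" by (simp add: algebra_simps)
  have ne: "real n * T \<noteq> real (Suc n) * T" using T by simp
  have bin: "real (Suc n) * T \<in> {real n * T..real (Suc n) * T}" using T by simp
  have L0: "L \<ge> 0" using P.s_nonneg[OF _ bin] s0 ne by simp
  have Lb: "L \<le> fst (x (real n * T)) * exp (A * T)" using P.s_exp[OF _ _ bin] s0 i0 ne ba by simp
  have I0: "snd (x (real (Suc n) * T)) \<ge> 0" using P.i_nonneg[OF _ bin] i0 by simp
  have "(1 - p) * L \<le> (1 - p) * (fst (x (real n * T)) * exp (A * T))" using Lb p by (intro mult_left_mono) auto
  moreover have "(1 - p) * L \<ge> 0" using L0 p by simp
  moreover have "snd (x (real (Suc n) * T)) \<le> exp (- ((\<sigma> + g) / 2) * T) * snd (x (real n * T))"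
    if "\<beta>0 * fst (x (real n * T)) * exp (A * T) \<le> (\<sigma> + g) / 2"
    using P.i_decay[OF _ _ bin] s0 i0 ne ba that by (simp add: mult.commute)
  ultimately show ?thesis using L I0 by (simp add: mult_ac)
qed

lemma step2:
  fixes x :: "real \<Rightarrow> real \<times> real" and n :: nat and A \<beta>0 \<sigma> g p T :: real
  assumes tr: "is_trajectory A \<beta>0 \<sigma> g p T y x" and T: "T > 0"
    and pos: "0 < A" "0 < \<beta>0" "0 \<le> \<sigma> + g" and p: "0 \<le> p" "p < 1"
    and s0: "fst (x (real n * T)) > 0" and i0: "snd (x (real n * T)) \<ge> 0"
  shows "\<exists>L>0. fst (x (real (Suc n) * T)) = (1 - p) * L \<and> snd (x (real (Suc n) * T)) \<ge> 0 \<and>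
    snd (x (real (Suc n) * T)) * L powr \<beta>0 \<le> snd (x (real n * T)) * fst (x (real n * T)) powr \<beta>0 * exp ((\<beta>0 * A - (\<sigma> + g)) * T) \<and>
    1 / L - 1 / A \<ge> (1 / fst (x (real n * T)) - 1 / A) * exp (- A * T) \<and>
    (\<beta>0 * (snd (x (real n * T)) * exp (\<beta>0 * max A (fst (x (real n * T))) * T)) \<le> A / 2 \<longrightarrow>
      1 / L - 1 / A \<le> (1 / fst (x (real n * T)) - 1 / A) * exp (- A * T) +
         \<beta>0 * (snd (x (real n * T)) * exp (\<beta>0 * max A (fst (x (real n * T))) * T)) *
           max (1 / fst (x (real n * T))) (2 / A) / A)"
proof -
  obtain L where P: "period A \<beta>0 \<sigma> g (\<lambda>t. if t = real (Suc n) * T then L else fst (x t)) (\<lambda>t. snd (x t))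
        (real n * T) (real (Suc n) * T)" and L: "fst (x (real (Suc n) * T)) = (1 - p) * L"
    using traj_period[OF tr T pos] by blast
  interpret P: period A \<beta>0 \<sigma> g "\<lambda>t. if t = real (Suc n) * T then L else fst (x t)" "\<lambda>t. snd (x t)"
        "real n * T" "real (Suc n) * T" by (rule P)
  define sn iN where "sn = fst (x (real n * T))" and "iN = snd (x (real n * T))"
  have ba: "real (Suc n) * T - real n * T = T" by (simp add: algebra_simps)
  have ne: "real n * T \<noteq> real (Suc n) * T" using T by simp
  have bin: "real (Suc n) * T \<in> {real n * T..real (Suc n) * T}" using T by simp
  have sa: "(if real n * T = real (Suc n) * T then L else fst (x (real n * T))) = sn"
    using ne by (simp add: sn_def)
  have sa0: "(if real n * T = real (Suc n) * T then L else fst (x (real n * T))) > 0" using sa s0 sn_def by simp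
  have L0: "L > 0" using P.s_pos[OF sa0 bin] by simp
  have I0: "snd (x (real (Suc n) * T)) \<ge> 0" using P.i_nonneg[OF _ bin] i0 by simp
  have V: "snd (x (real (Suc n) * T)) * L powr \<beta>0 \<le> iN * sn powr \<beta>0 * exp ((\<beta>0 * A - (\<sigma> + g)) * T)"
    using P.V_decay[OF sa0 i0] sa ba by (simp add: iN_def)
  have wl: "1 / L - 1 / A \<ge> (1 / sn - 1 / A) * exp (- A * T)"
    using P.w_lower[OF sa0 i0 bin] sa ba by simp
  have wu: "1 / L - 1 / A \<le> (1 / sn - 1 / A) * exp (- A * T) +
         \<beta>0 * (iN * exp (\<beta>0 * max A sn * T)) * max (1 / sn) (2 / A) / A"
    if small: "\<beta>0 * (iN * exp (\<beta>0 * max A sn * T)) \<le> A / 2"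
  proof -
    have ib: "snd (x t) \<le> iN * exp (\<beta>0 * max A sn * T)" if t: "t \<in> {real n * T..real (Suc n) * T}" for t
    proof -
      have "snd (x t) \<le> iN * exp (\<beta>0 * max A sn * (t - real n * T))"
        using P.i_growth[OF sa0 i0 t] sa by (simp add: iN_def)
      also have "\<dots> \<le> iN * exp (\<beta>0 * max A sn * T)"
      proof (intro mult_left_mono)
        have "t - real n * T \<le> T" using t ba by auto
        then have "\<beta>0 * max A sn * (t - real n * T) \<le> \<beta>0 * max A sn * T"
          using pos by (intro mult_left_mono) auto
        then show "exp (\<beta>0 * max A sn * (t - real n * T)) \<le> exp (\<beta>0 * max A sn * T)" by simp
      qed (use i0 iN_def in auto)
      finally show ?thesis .
    qed
    have small': "\<beta>0 * snd (x t) \<le> A / 2" if t: "t \<in> {real n * T..real (Suc n) * T}" for t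
      using ib[OF t] pos small by (smt (verit) mult_left_mono)
    have ub: "1 / (if t = real (Suc n) * T then L else fst (x t)) \<le> max (1 / sn) (2 / A)"
      if t: "t \<in> {real n * T..real (Suc n) * T}" for t
      using P.u_bound[OF sa0 i0 small' t] sa by simp
    have "iN * exp (\<beta>0 * max A sn * T) \<ge> 0" using i0 iN_def by simp
    from P.w_upper[OF sa0 i0 this] ib ub sa ba
    show ?thesis by simp
  qed
  show ?thesis using L0 L I0 V wl wu unfolding sn_def iN_def by blast
qed



lemma las_intro:
  assumes "\<And>\<epsilon>. \<epsilon> > 0 \<Longrightarrow> \<exists>\<delta>>0. \<forall>y\<in>state_space. dist y x0 < \<delta> \<longrightarrow>
      (\<forall>x. is_trajectory A \<beta>0 \<sigma> g p T y x \<longrightarrow>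
        (\<forall>k::nat. dist (x (real k * T)) x0 < \<epsilon>) \<and> (\<lambda>k::nat. x (real k * T)) \<longlonglongrightarrow> x0)"
  shows "loc_asym_stable A \<beta>0 \<sigma> g p T x0"
  unfolding loc_asym_stable_def
proof (intro conjI allI impI)
  fix V :: "(real \<times> real) set" assume V: "open V \<and> x0 \<in> V"
  then obtain \<epsilon> where e: "\<epsilon> > 0" "ball x0 \<epsilon> \<subseteq> V" using open_contains_ball by blast
  obtain \<delta> where d: "\<delta> > 0" "\<forall>y\<in>state_space. dist y x0 < \<delta> \<longrightarrow>
      (\<forall>x. is_trajectory A \<beta>0 \<sigma> g p T y x \<longrightarrow>
        (\<forall>k::nat. dist (x (real k * T)) x0 < \<epsilon>) \<and> (\<lambda>k::nat. x (real k * T)) \<longlonglongrightarrow> x0)"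
    using assms[OF e(1)] by blast
  show "\<exists>W. open W \<and> x0 \<in> W \<and> W \<subseteq> V \<and>
           (\<forall>y \<in> W \<inter> state_space. \<forall>x. is_trajectory A \<beta>0 \<sigma> g p T y x \<longrightarrow>
              (\<forall>k::nat. x (real k * T) \<in> V))"
  proof (intro exI[of _ "ball x0 (min \<delta> \<epsilon>)"] conjI ballI allI impI)
    show "ball x0 (min \<delta> \<epsilon>) \<subseteq> V" using e by auto
    fix y x k assume y: "y \<in> ball x0 (min \<delta> \<epsilon>) \<inter> state_space" and tr: "is_trajectory A \<beta>0 \<sigma> g p T y x"
    then have "dist y x0 < \<delta>" by (simp add: dist_commute)
    then have "dist (x (real k * T)) x0 < \<epsilon>" using d(2) y tr by blast
    then show "x (real k * T) \<in> V" using e by (auto simp: dist_commute)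
  qed (use e d in auto)
next
  obtain \<delta> where d: "\<delta> > 0" "\<forall>y\<in>state_space. dist y x0 < \<delta> \<longrightarrow>
      (\<forall>x. is_trajectory A \<beta>0 \<sigma> g p T y x \<longrightarrow>
        (\<forall>k::nat. dist (x (real k * T)) x0 < 1) \<and> (\<lambda>k::nat. x (real k * T)) \<longlonglongrightarrow> x0)"
    using assms[of 1] by auto
  show "\<exists>V. open V \<and> x0 \<in> V \<and>
        (\<forall>y \<in> V \<inter> state_space. \<forall>x. is_trajectory A \<beta>0 \<sigma> g p T y x \<longrightarrow>
           (\<lambda>k::nat. x (real k * T)) \<longlonglongrightarrow> x0)"
    by (intro exI[of _ "ball x0 \<delta>"]) (use d in \<open>auto simp: dist_commute\<close>)
qed

lemma part1_core:
  fixes x :: "real \<Rightarrow> real \<times> real" and A \<beta>0 \<sigma> g p T :: real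
  assumes tr: "is_trajectory A \<beta>0 \<sigma> g p T y x" and T: "T > 0"
    and pos: "0 < A" "0 < \<beta>0" "0 \<le> \<sigma> + g" and p: "0 \<le> p" "p \<le> 1"
    and q: "(1 - p) * exp (A * T) \<le> 1"
    and s0: "fst y \<ge> 0" and i0: "snd y \<ge> 0" and small: "\<beta>0 * fst y * exp (A * T) \<le> (\<sigma> + g) / 2"
  shows "0 \<le> fst (x (real n * T)) \<and> fst (x (real n * T)) \<le> ((1 - p) * exp (A * T)) ^ n * fst y \<and>
         0 \<le> snd (x (real n * T)) \<and> snd (x (real n * T)) \<le> exp (- ((\<sigma> + g) / 2) * T) ^ n * snd y"
proof (induction n)
  case 0
  have "x 0 = y" using tr by (simp add: is_trajectory_def)
  then show ?case using s0 i0 by simp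
next
  case (Suc n)
  let ?q = "(1 - p) * exp (A * T)" and ?r = "exp (- ((\<sigma> + g) / 2) * T)"
  have q0: "?q \<ge> 0" using p by simp
  have st: "fst (x (real (Suc n) * T)) \<ge> 0 \<and> snd (x (real (Suc n) * T)) \<ge> 0 \<and>
    fst (x (real (Suc n) * T)) \<le> ?q * fst (x (real n * T)) \<and>
    (\<beta>0 * fst (x (real n * T)) * exp (A * T) \<le> (\<sigma> + g) / 2 \<longrightarrow>
       snd (x (real (Suc n) * T)) \<le> ?r * snd (x (real n * T)))"
    using step1[OF tr T pos p] Suc.IH by blast
  have "?q ^ n \<le> 1" using q0 q by (simp add: power_le_one)
  then have "?q ^ n * fst y \<le> 1 * fst y" using s0 by (intro mult_right_mono) auto
  then have "fst (x (real n * T)) \<le> fst y" using Suc.IH by linarith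
  then have "\<beta>0 * fst (x (real n * T)) * exp (A * T) \<le> \<beta>0 * fst y * exp (A * T)"
    using pos by (intro mult_right_mono mult_left_mono) auto
  then have c: "snd (x (real (Suc n) * T)) \<le> ?r * snd (x (real n * T))" using st small by linarith
  have "?q * fst (x (real n * T)) \<le> ?q * (?q ^ n * fst y)"
    using Suc.IH q0 by (intro mult_left_mono) auto
  then have "fst (x (real (Suc n) * T)) \<le> ?q * (?q ^ n * fst y)" using st by linarith
  moreover have "?r * snd (x (real n * T)) \<le> ?r * (?r ^ n * snd y)"
    using Suc.IH by (intro mult_left_mono) auto
  then have "snd (x (real (Suc n) * T)) \<le> ?r * (?r ^ n * snd y)" using c by linarith
  ultimately show ?case using st by (simp add: mult.assoc)
qed


lemma norm_pair_mono:
  fixes a b a' b' :: real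
  assumes "0 \<le> a" "a \<le> a'" "0 \<le> b" "b \<le> b'"
  shows "norm (a, b) \<le> norm (a', b')"
  unfolding norm_Pair using assms by (auto intro!: real_sqrt_le_mono add_mono power_mono)

lemma sandwich0:
  fixes f h :: "nat \<Rightarrow> real"
  assumes "\<And>n. 0 \<le> f n" "\<And>n. f n \<le> h n" "h \<longlonglongrightarrow> 0"
  shows "f \<longlonglongrightarrow> 0"
  by (rule tendsto_sandwich[of "\<lambda>n. 0" f sequentially h 0]) (use assms in auto)

lemma part1:
  fixes A \<beta>0 \<sigma> g p T :: real
  assumes "0 < A" "A \<le> 1" "0 < \<beta>0" "0 \<le> \<sigma>" "0 \<le> g" "0 < \<sigma> + g"
    and "0 \<le> p" "p \<le> 1" "0 < T" and pp: "p > p1 A T"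
  shows "loc_asym_stable A \<beta>0 \<sigma> g p T (0, 0)"
proof (rule las_intro)
  fix \<epsilon> :: real assume e: "\<epsilon> > 0"
  define \<delta> where "\<delta> = min \<epsilon> (exp (- A * T) * (\<sigma> + g) / (2 * \<beta>0))"
  have d0: "\<delta> > 0" using e assms by (simp add: \<delta>_def)
  have q: "(1 - p) * exp (A * T) < 1"
  proof -
    have "1 - p < exp (- A * T)" using pp by (simp add: p1_def)
    then have "(1 - p) * exp (A * T) < exp (- A * T) * exp (A * T)" by (intro mult_strict_right_mono) auto
    then show ?thesis by (simp flip: exp_add)
  qed
  have r: "exp (- ((\<sigma> + g) / 2) * T) < 1" using assms by simp
  show "\<exists>\<delta>>0. \<forall>y\<in>state_space. dist y (0, 0) < \<delta> \<longrightarrow>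
      (\<forall>x. is_trajectory A \<beta>0 \<sigma> g p T y x \<longrightarrow>
        (\<forall>k::nat. dist (x (real k * T)) (0, 0) < \<epsilon>) \<and> (\<lambda>k::nat. x (real k * T)) \<longlonglongrightarrow> (0, 0))"
  proof (intro exI[of _ \<delta>] conjI d0 ballI impI allI)
    fix y :: "real \<times> real" and x assume y: "y \<in> state_space" "dist y (0, 0) < \<delta>"
      and tr: "is_trajectory A \<beta>0 \<sigma> g p T y x"
    have s0: "fst y \<ge> 0" and i0: "snd y \<ge> 0" using y(1) by (auto simp: state_space_def)
    have ny: "norm y < \<delta>" using y(2) by (simp add: dist_norm zero_prod_def[symmetric])
    have "fst y \<le> norm y" using norm_fst_le[of "fst y" "snd y"] by simp
    then have "fst y \<le> exp (- A * T) * (\<sigma> + g) / (2 * \<beta>0)" using ny by (simp add: \<delta>_def)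
    then have "\<beta>0 * fst y * exp (A * T) \<le> \<beta>0 * (exp (- A * T) * (\<sigma> + g) / (2 * \<beta>0)) * exp (A * T)"
      using assms by (intro mult_right_mono mult_left_mono) auto
    also have "\<dots> = (\<sigma> + g) / 2" using assms by (simp add: field_simps flip: exp_add)
    finally have small: "\<beta>0 * fst y * exp (A * T) \<le> (\<sigma> + g) / 2" .
    note core = part1_core[OF tr assms(9) assms(1,3) _ assms(7,8) less_imp_le[OF q] s0 i0 small]
    have core': "0 \<le> fst (x (real n * T)) \<and> fst (x (real n * T)) \<le> ((1 - p) * exp (A * T)) ^ n * fst y \<and>
         0 \<le> snd (x (real n * T)) \<and> snd (x (real n * T)) \<le> exp (- ((\<sigma> + g) / 2) * T) ^ n * snd y" for n
      using core[of n] assms by auto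
    show "dist (x (real k * T)) (0, 0) < \<epsilon>" for k
    proof -
      have "((1 - p) * exp (A * T)) ^ k \<le> 1" using q assms by (intro power_le_one) auto
      then have "((1 - p) * exp (A * T)) ^ k * fst y \<le> 1 * fst y" using s0 by (intro mult_right_mono) auto
      then have a: "fst (x (real k * T)) \<le> fst y" using core'[of k] by linarith
      have "exp (- ((\<sigma> + g) / 2) * T) ^ k \<le> 1" using r by (intro power_le_one) auto
      then have "exp (- ((\<sigma> + g) / 2) * T) ^ k * snd y \<le> 1 * snd y" using i0 by (intro mult_right_mono) auto
      then have b: "snd (x (real k * T)) \<le> snd y" using core'[of k] by linarith
      have "norm (fst (x (real k * T)), snd (x (real k * T))) \<le> norm (fst y, snd y)"
        using a b core'[of k] by (intro norm_pair_mono) auto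
      then have "norm (x (real k * T)) < \<delta>" using ny by simp
      then show ?thesis using d0 by (simp add: dist_norm \<delta>_def zero_prod_def[symmetric])
    qed
    have l1: "(\<lambda>k. fst (x (real k * T))) \<longlonglongrightarrow> 0"
    proof (rule sandwich0)
      show "(\<lambda>k. ((1 - p) * exp (A * T)) ^ k * fst y) \<longlonglongrightarrow> 0"
        using q assms by (intro tendsto_mult_left_zero LIMSEQ_power_zero) auto
    qed (use core' in auto)
    have l2: "(\<lambda>k. snd (x (real k * T))) \<longlonglongrightarrow> 0"
    proof (rule sandwich0)
      show "(\<lambda>k. exp (- ((\<sigma> + g) / 2) * T) ^ k * snd y) \<longlonglongrightarrow> 0"
        using r by (intro tendsto_mult_left_zero LIMSEQ_power_zero) auto
    qed (use core' in auto)
    show "(\<lambda>k. x (real k * T)) \<longlonglongrightarrow> (0, 0)"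
      using tendsto_Pair[OF l1 l2] by simp
  qed
qed



lemma L1:
  fixes s us :: real
  assumes "s > 0" "\<bar>1 / s - us\<bar> \<le> us / 2" "us > 0"
  shows "2 / (3 * us) \<le> s \<and> s \<le> 2 / us \<and> 1 / s \<le> 3 * us / 2 \<and> us / 2 \<le> 1 / s"
proof -
  have u: "us / 2 \<le> 1 / s" "1 / s \<le> 3 * us / 2"
    using abs_le_D1[OF assms(2)] abs_le_D2[OF assms(2)] by linarith+
  have "s \<le> 2 / us" using u(1) assms by (simp add: field_simps)
  moreover have "2 / (3 * us) \<le> s" using u(2) assms by (simp add: field_simps)
  ultimately show ?thesis using u by simp
qed

lemma L2:
  fixes i s s0 i0 R b :: real
  assumes "i \<ge> 0" "s > 0" "s0 > 0" "i * s powr b \<le> R * (i0 * s0 powr b)" "s0 \<le> 3 * s" "b \<ge> 0" "R \<ge> 0" "i0 \<ge> 0"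
  shows "i \<le> 3 powr b * R * i0"
proof -
  have "s0 powr b \<le> (3 * s) powr b" using assms by (intro powr_mono2) auto
  also have "\<dots> = 3 powr b * s powr b" by (simp add: powr_mult)
  finally have "R * (i0 * s0 powr b) \<le> R * (i0 * (3 powr b * s powr b))"
    using assms by (intro mult_left_mono) auto
  then have "i * s powr b \<le> (3 powr b * R * i0) * s powr b" using assms(4) by (simp add: mult_ac)
  moreover have "s powr b > 0" using assms(2) by simp
  ultimately show ?thesis by (rule mult_right_le_imp_le)
qed

lemma L3:
  fixes L p A E us u d :: real
  assumes "L > 0" "p < 1" "us * (1 - p) = 1 / A + (us - 1 / A) * E"
    and lo: "1 / L - 1 / A \<ge> (u - 1 / A) * E" and hi: "1 / L - 1 / A \<le> (u - 1 / A) * E + d"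
  shows "E / (1 - p) * (u - us) \<le> 1 / ((1 - p) * L) - us \<and>
         1 / ((1 - p) * L) - us \<le> E / (1 - p) * (u - us) + d / (1 - p)"
proof -
  define N where "N = (1 / L - 1 / A) - (us - 1 / A) * E"
  have eq: "1 / ((1 - p) * L) - us = N / (1 - p)"
  proof -
    have "N = 1 / L - us * (1 - p)" unfolding N_def using assms(3) by simp
    then have "N / (1 - p) = (1 / L - us * (1 - p)) / (1 - p)" by simp
    also have "\<dots> = 1 / ((1 - p) * L) - us" using assms(1,2) by (simp add: field_simps)
    finally show ?thesis by simp
  qed
  have "N \<ge> (u - us) * E" using lo unfolding N_def by (simp add: algebra_simps)
  then have a: "N / (1 - p) \<ge> (u - us) * E / (1 - p)" using assms(2) by (intro divide_right_mono) auto
  have "N \<le> (u - us) * E + d" using hi unfolding N_def by (simp add: algebra_simps)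
  then have b: "N / (1 - p) \<le> ((u - us) * E + d) / (1 - p)" using assms(2) by (intro divide_right_mono) auto
  have e1: "(u - us) * E / (1 - p) = E / (1 - p) * (u - us)" by simp
  have e2: "((u - us) * E + d) / (1 - p) = E / (1 - p) * (u - us) + d / (1 - p)"
    by (simp add: add_divide_distrib)
  show ?thesis using a b e1 e2 unfolding eq by linarith
qed

lemma L4:
  fixes lam e e' d c m K mu :: real
  assumes "lam \<ge> 0" "lam * e \<le> e'" "e' \<le> lam * e + d" "d \<le> c * m" "\<bar>e\<bar> \<le> K * m"
    "c \<le> K * (mu - lam)" "m \<ge> 0"
  shows "\<bar>e'\<bar> \<le> K * (m * mu)"
proof -
  have "lam * e \<le> lam * \<bar>e\<bar>" using assms(1) by (intro mult_left_mono) auto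
  moreover have "lam * (- \<bar>e\<bar>) \<le> lam * e" using assms(1) by (intro mult_left_mono) auto
  ultimately have "\<bar>e'\<bar> \<le> lam * \<bar>e\<bar> + d" using assms(2,3) by (auto simp: abs_le_iff)
  moreover have "lam * \<bar>e\<bar> \<le> lam * (K * m)" using assms by (intro mult_left_mono) auto
  moreover have "c * m \<le> K * (mu - lam) * m" using assms by (intro mult_right_mono) auto
  moreover have "lam * (K * m) + K * (mu - lam) * m = K * (m * mu)" by (simp add: algebra_simps)
  ultimately show ?thesis using assms(4) by linarith
qed


lemma part2_core:
  fixes x :: "real \<Rightarrow> real \<times> real" and A \<beta>0 \<sigma> g p T us lam E rho mu K c2 Ci K1 M Umx :: real
  assumes tr: "is_trajectory A \<beta>0 \<sigma> g p T y x" and T: "T > 0"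
    and pos: "0 < A" "0 < \<beta>0" "0 \<le> \<sigma> + g" and p: "0 \<le> p" "p < 1"
    and E: "E = exp (- A * T)" and lam: "lam = E / (1 - p)"
    and fp: "us * (1 - p) = 1 / A + (us - 1 / A) * E" and us: "us > 0"
    and rho: "rho = (1 - p) powr \<beta>0 * exp ((\<beta>0 * A - (\<sigma> + g)) * T)"
    and mu: "lam < mu" "rho \<le> mu" "mu \<le> 1"
    and M: "M = max A (2 / us)" and K1: "K1 = exp (\<beta>0 * M * T)"
    and Umx: "Umx = max (3 * us / 2) (2 / A)" and c2: "c2 = \<beta>0 * K1 * Umx / (A * (1 - p))"
    and Ci: "Ci = 3 powr \<beta>0"
    and s0: "fst y > 0" and i0: "snd y \<ge> 0"
    and K: "\<bar>1 / fst y - us\<bar> + c2 * Ci * snd y / (mu - lam) \<le> K" "K \<le> us / 2"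
    and small: "\<beta>0 * K1 * Ci * snd y \<le> A / 2"
  shows "fst (x (real n * T)) > 0 \<and> snd (x (real n * T)) \<ge> 0 \<and>
         \<bar>1 / fst (x (real n * T)) - us\<bar> \<le> K * mu ^ n \<and>
         snd (x (real n * T)) * fst (x (real n * T)) powr \<beta>0 \<le> rho ^ n * (snd y * fst y powr \<beta>0)"
proof (induction n)
  have Umx0: "Umx > 0" unfolding Umx using us by (auto simp: less_max_iff_disj)
  have c20: "c2 \<ge> 0" unfolding c2 K1 using pos p Umx0 by (auto intro!: divide_nonneg_pos)
  have Ci0: "Ci \<ge> 0" unfolding Ci by simp
  have lam0: "lam \<ge> 0" using p unfolding lam E by simp
  have "c2 * Ci * snd y / (mu - lam) \<ge> 0" using c20 Ci0 i0 mu by simp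
  case 0
  have "x 0 = y" using tr by (simp add: is_trajectory_def)
  then show ?case using s0 i0 K(1) \<open>c2 * Ci * snd y / (mu - lam) \<ge> 0\<close> by simp
next
  case (Suc n)
  have Umx0: "Umx > 0" unfolding Umx using us by (auto simp: less_max_iff_disj)
  have c20: "c2 \<ge> 0" unfolding c2 K1 using pos p Umx0 by (auto intro!: divide_nonneg_pos)
  have Ci0: "Ci \<ge> 0" unfolding Ci by simp
  have lam0: "lam \<ge> 0" using p unfolding lam E by simp
  have rho0: "rho \<ge> 0" unfolding rho by simp
  have mu0: "mu \<ge> 0" using lam0 mu by simp
  have cK: "c2 * Ci * snd y \<le> K * (mu - lam)"
  proof -
    have "c2 * Ci * snd y / (mu - lam) \<le> K" using K(1) by (smt (verit) abs_ge_zero)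
    then show ?thesis using mu(1) by (simp add: pos_divide_le_eq)
  qed
  have K0: "K \<ge> 0" using cK c20 Ci0 i0 mu(1)
    by (smt (verit, ccfv_SIG) mult_nonneg_nonneg mult_neg_pos)
  define sn iN where "sn = fst (x (real n * T))" and "iN = snd (x (real n * T))"
  have sn0: "sn > 0" and iN0: "iN \<ge> 0" and en: "\<bar>1 / sn - us\<bar> \<le> K * mu ^ n"
    and Vn: "iN * sn powr \<beta>0 \<le> rho ^ n * (snd y * fst y powr \<beta>0)"
    using Suc.IH unfolding sn_def iN_def by auto
  have mun: "mu ^ n \<le> 1" "mu ^ n \<ge> 0" using mu0 mu(3) by (auto intro: power_le_one)
  have "K * mu ^ n \<le> K * 1" using mun K0 by (intro mult_left_mono) auto
  then have en2: "\<bar>1 / sn - us\<bar> \<le> us / 2" using en K(2) by linarith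
  have rsn: "2 / (3 * us) \<le> sn \<and> sn \<le> 2 / us \<and> 1 / sn \<le> 3 * us / 2 \<and> us / 2 \<le> 1 / sn"
    using L1[OF sn0 en2 us] .
  have e0: "\<bar>1 / fst y - us\<bar> \<le> us / 2"
    using K c20 Ci0 i0 mu(1) \<open>0 \<le> K\<close> by (smt (verit) divide_nonneg_pos mult_nonneg_nonneg)
  have rs0: "2 / (3 * fst y) \<le> 2 / (3 * fst y) \<and> fst y \<le> 2 / us" using L1[OF s0 e0 us] by simp
  have "3 * sn \<ge> 2 / us" using rsn us by (simp add: field_simps)
  then have s03: "fst y \<le> 3 * sn" using rs0 by linarith
  have rhon: "rho ^ n \<le> mu ^ n" "rho ^ n \<ge> 0" "rho ^ n \<le> 1"
    using rho0 mu mun by (auto intro: power_mono order_trans)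
  have iNb: "iN \<le> Ci * rho ^ n * snd y"
    using L2[OF iN0 sn0 s0 Vn s03 _ rhon(2) i0] pos unfolding Ci by simp
  have iNb1: "iN \<le> Ci * snd y"
  proof -
    have "Ci * rho ^ n * snd y \<le> Ci * 1 * snd y" using rhon Ci0 i0 by (intro mult_right_mono mult_left_mono) auto
    then show ?thesis using iNb by simp
  qed
  obtain L where L0: "L > 0" and Ls: "fst (x (real (Suc n) * T)) = (1 - p) * L"
    and I1: "snd (x (real (Suc n) * T)) \<ge> 0"
    and V1: "snd (x (real (Suc n) * T)) * L powr \<beta>0 \<le> iN * sn powr \<beta>0 * exp ((\<beta>0 * A - (\<sigma> + g)) * T)"
    and wl: "1 / L - 1 / A \<ge> (1 / sn - 1 / A) * exp (- A * T)"
    and wu: "\<beta>0 * (iN * exp (\<beta>0 * max A sn * T)) \<le> A / 2 \<Longrightarrow>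
      1 / L - 1 / A \<le> (1 / sn - 1 / A) * exp (- A * T) +
         \<beta>0 * (iN * exp (\<beta>0 * max A sn * T)) * max (1 / sn) (2 / A) / A"
    using step2[OF tr T pos p, of n] sn0 iN0 unfolding sn_def iN_def by blast
  have ex: "exp (\<beta>0 * max A sn * T) \<le> K1"
  proof -
    have "max A sn \<le> M" using rsn unfolding M by auto
    then have "\<beta>0 * max A sn * T \<le> \<beta>0 * M * T" using pos T by (intro mult_right_mono mult_left_mono) auto
    then show ?thesis unfolding K1 by simp
  qed
  have ie: "iN * exp (\<beta>0 * max A sn * T) \<le> (Ci * rho ^ n * snd y) * K1"
    using iNb ex iN0 by (intro mult_mono) auto
  have ie1: "iN * exp (\<beta>0 * max A sn * T) \<le> (Ci * snd y) * K1"
    using iNb1 ex iN0 by (intro mult_mono) auto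
  have cond: "\<beta>0 * (iN * exp (\<beta>0 * max A sn * T)) \<le> A / 2"
  proof -
    have "\<beta>0 * (iN * exp (\<beta>0 * max A sn * T)) \<le> \<beta>0 * ((Ci * snd y) * K1)"
      using ie1 pos by (intro mult_left_mono) auto
    then show ?thesis using small by (simp add: mult_ac)
  qed
  define d where "d = \<beta>0 * (iN * exp (\<beta>0 * max A sn * T)) * max (1 / sn) (2 / A) / A"
  have "max (1 / sn) (2 / A) > 0" using sn0 by (auto simp: less_max_iff_disj)
  then have d0: "d \<ge> 0" unfolding d_def using pos iN0 by (intro divide_nonneg_pos mult_nonneg_nonneg) auto
  have mx: "max (1 / sn) (2 / A) \<le> Umx" using rsn unfolding Umx by auto
  have "d \<le> \<beta>0 * ((Ci * rho ^ n * snd y) * K1) * Umx / A"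
  proof -
    have "\<beta>0 * (iN * exp (\<beta>0 * max A sn * T)) * max (1 / sn) (2 / A) \<le> \<beta>0 * ((Ci * rho ^ n * snd y) * K1) * Umx"
    proof (rule mult_mono[OF _ mx])
      show "\<beta>0 * (iN * exp (\<beta>0 * max A sn * T)) \<le> \<beta>0 * (Ci * rho ^ n * snd y * K1)"
        by (rule mult_left_mono[OF ie]) (use pos in auto)
      moreover have "0 \<le> \<beta>0 * (iN * exp (\<beta>0 * max A sn * T))" using pos iN0 by simp
      ultimately show "0 \<le> \<beta>0 * (Ci * rho ^ n * snd y * K1)" by linarith
      show "0 \<le> max (1 / sn) (2 / A)" using sn0 by (simp add: le_max_iff_disj)
    qed
    then show ?thesis unfolding d_def using pos by (intro divide_right_mono) auto
  qed
  also have "\<dots> = c2 * Ci * snd y * rho ^ n * (1 - p)" unfolding c2 using pos p by (simp add: field_simps)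
  finally have "d / (1 - p) \<le> c2 * Ci * snd y * rho ^ n" using p by (simp add: field_simps)
  also have "\<dots> \<le> c2 * Ci * snd y * mu ^ n" using rhon c20 Ci0 i0 by (intro mult_left_mono) auto
  finally have dB: "d / (1 - p) \<le> c2 * Ci * snd y * mu ^ n" .
  have e': "lam * (1 / sn - us) \<le> 1 / ((1 - p) * L) - us \<and> 1 / ((1 - p) * L) - us \<le> lam * (1 / sn - us) + d / (1 - p)"
    using L3[OF L0 p(2) fp wl[folded E] wu[OF cond, folded d_def E]] unfolding lam by simp
  have "\<bar>1 / ((1 - p) * L) - us\<bar> \<le> K * (mu ^ n * mu)"
    using L4[OF lam0 _ _ dB en cK mun(2)] e' by blast
  moreover have "fst (x (real (Suc n) * T)) > 0" using Ls L0 p by simp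
  moreover have "snd (x (real (Suc n) * T)) * fst (x (real (Suc n) * T)) powr \<beta>0 \<le> rho ^ Suc n * (snd y * fst y powr \<beta>0)"
  proof -
    have "snd (x (real (Suc n) * T)) * fst (x (real (Suc n) * T)) powr \<beta>0
        = (1 - p) powr \<beta>0 * (snd (x (real (Suc n) * T)) * L powr \<beta>0)"
      using Ls L0 p by (simp add: powr_mult)
    also have "\<dots> \<le> (1 - p) powr \<beta>0 * (iN * sn powr \<beta>0 * exp ((\<beta>0 * A - (\<sigma> + g)) * T))"
      using V1 by (intro mult_left_mono) auto
    also have "\<dots> = rho * (iN * sn powr \<beta>0)" unfolding rho by (simp add: mult_ac)
    also have "\<dots> \<le> rho * (rho ^ n * (snd y * fst y powr \<beta>0))" using Vn rho0 by (intro mult_left_mono)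
    finally show ?thesis by (simp add: mult_ac)
  qed
  ultimately show ?case using Ls I1 by (simp add: mult_ac)
qed



lemma L5:
  fixes s us :: real
  assumes "s > 0" "us > 0" "s \<le> 2 / us"
  shows "\<bar>s - 1 / us\<bar> \<le> 2 * \<bar>1 / s - us\<bar> / us^2"
proof -
  have eq: "s - 1 / us = (us - 1 / s) * (s / us)" using assms by (simp add: field_simps)
  have "s / us \<le> (2 / us) / us" using assms by (intro divide_right_mono) auto
  then have "\<bar>1 / s - us\<bar> * (s / us) \<le> \<bar>1 / s - us\<bar> * (2 / us^2)"
    by (intro mult_left_mono) (auto simp: power2_eq_square)
  moreover have "\<bar>s - 1 / us\<bar> = \<bar>1 / s - us\<bar> * (s / us)" unfolding eq using assms
    by (simp add: abs_mult abs_minus_commute)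
  moreover have "\<bar>1 / s - us\<bar> * (2 / us^2) = 2 * \<bar>1 / s - us\<bar> / us^2" by simp
  ultimately show ?thesis by linarith
qed

lemma L6:
  fixes s0 ss :: real
  assumes "ss > 0" "ss / 2 \<le> s0"
  shows "\<bar>1 / s0 - 1 / ss\<bar> \<le> 2 * \<bar>s0 - ss\<bar> / ss^2"
proof -
  have s0: "s0 > 0" using assms by simp
  have eq: "\<bar>1 / s0 - 1 / ss\<bar> = \<bar>s0 - ss\<bar> / (s0 * ss)" using s0 assms
    by (simp add: field_simps abs_div abs_mult abs_minus_commute)
  have "ss / 2 * ss \<le> s0 * ss" using assms by (intro mult_right_mono) auto
  then have "\<bar>s0 - ss\<bar> / (s0 * ss) \<le> \<bar>s0 - ss\<bar> / (ss / 2 * ss)"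
    using assms by (intro divide_left_mono) auto
  also have "\<dots> = 2 * \<bar>s0 - ss\<bar> / ss^2" by (simp add: power2_eq_square)
  finally show ?thesis using eq by simp
qed


lemma part2:
  fixes A \<beta>0 \<sigma> g p T :: real
  assumes "0 < A" "A \<le> 1" "0 < \<beta>0" "0 \<le> \<sigma>" "0 \<le> g" "0 < \<sigma> + g"
    and "0 \<le> p" "p \<le> 1" "0 < T" and pp: "p2 A \<beta>0 \<sigma> g T < p" "p < p1 A T"
  shows "loc_asym_stable A \<beta>0 \<sigma> g p T (Sper A p T 0, 0)"
proof -
  define E where "E = exp (- A * T)"
  define lam where "lam = E / (1 - p)"
  define us where "us = (1 - E) / (A * (1 - p - E))"
  define ss where "ss = 1 / us"
  define rho where "rho = (1 - p) powr \<beta>0 * exp ((\<beta>0 * A - (\<sigma> + g)) * T)"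
  define mu where "mu = max ((1 + lam) / 2) rho"
  define M where "M = max A (2 / us)"
  define K1 where "K1 = exp (\<beta>0 * M * T)"
  define Umx where "Umx = max (3 * us / 2) (2 / A)"
  define c2 where "c2 = \<beta>0 * K1 * Umx / (A * (1 - p))"
  define Ci where "Ci = (3::real) powr \<beta>0"
  have E0: "0 < E" "E < 1" using assms unfolding E_def by auto
  have Ep: "E < 1 - p" using pp(2) unfolding p1_def E_def by simp
  have p1': "p < 1" using Ep E0 by simp
  have lam: "0 \<le> lam" "lam < 1" using E0 Ep p1' unfolding lam_def by auto
  have us0: "us > 0" unfolding us_def using E0 Ep assms by (auto intro!: divide_pos_pos)
  have ss0: "ss > 0" unfolding ss_def using us0 by simp
  have fp: "us * (1 - p) = 1 / A + (us - 1 / A) * E"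
  proof -
    have nz: "1 - p - E > 0" using Ep by simp
    have h: "us * (1 - p - E) = (1 - E) / A" unfolding us_def using nz assms by simp
    have "us * (1 - p) = us * (1 - p - E) + us * E" by (simp add: algebra_simps)
    also have "\<dots> = (1 - E) / A + us * E" using h by simp
    also have "\<dots> = 1 / A + (us - 1 / A) * E" using assms by (simp add: field_simps)
    finally show ?thesis .
  qed
  have Sper: "Sper A p T 0 = ss"
  proof -
    have e: "E * exp (A * T) = 1" unfolding E_def by (simp flip: exp_add)
    have "Sper A p T 0 = A * (exp (A * T) * (1 - p) - 1) / (exp (A * T) * (1 - p) - 1 + p * exp (A * T))"
      unfolding Sper_def Let_def by simp
    also have "\<dots> = ss" unfolding ss_def us_def using e E0 Ep assms
      by (simp add: field_simps)
    finally show ?thesis .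
  qed
  have rho0: "rho \<ge> 0" unfolding rho_def by simp
  have rho1: "rho < 1"
  proof -
    have "1 - p < exp (- (A - Scrit \<beta>0 \<sigma> g) * T)" using pp(1) unfolding p2_def by simp
    then have "(1 - p) powr \<beta>0 < exp (- (A - Scrit \<beta>0 \<sigma> g) * T) powr \<beta>0"
      using p1' assms by (intro powr_less_mono2) auto
    also have "\<dots> = exp (- (\<beta>0 * A - (\<sigma> + g)) * T)"
      unfolding powr_def Scrit_def using assms by (simp add: field_simps)
    finally have "rho < exp (- (\<beta>0 * A - (\<sigma> + g)) * T) * exp ((\<beta>0 * A - (\<sigma> + g)) * T)"
      unfolding rho_def by (intro mult_strict_right_mono) auto
    then show ?thesis by (simp add: algebra_simps flip: exp_add)
  qed
  have mu: "lam < mu" "rho \<le> mu" "mu \<le> 1" "mu < 1" "mu \<ge> 0" using lam rho1 rho0 unfolding mu_def by (auto simp: less_max_iff_disj le_max_iff_disj)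
  have Umx0: "Umx > 0" unfolding Umx_def using us0 by (auto simp: less_max_iff_disj)
  have K10: "K1 > 0" unfolding K1_def by simp
  have c20: "c2 \<ge> 0" unfolding c2_def using assms p1' Umx0 K10 by (auto intro!: divide_nonneg_pos)
  have Ci0: "Ci > 0" unfolding Ci_def by simp
  note core = part2_core[OF _ assms(9) assms(1,3) _ assms(7) p1' E_def lam_def fp us0 rho_def mu(1,2,3)
      M_def K1_def Umx_def c2_def Ci_def]
  show ?thesis unfolding Sper
  proof (rule las_intro)
    fix \<epsilon> :: real assume e: "\<epsilon> > 0"
    define C3 where "C3 = 2 / ss^2 + c2 * Ci / (mu - lam)"
    define C4 where "C4 = 2 * C3 / us^2 + Ci"
    have C3: "C3 > 0" unfolding C3_def using ss0 c20 Ci0 mu by (auto intro!: add_pos_nonneg)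
    have C4: "C4 > 0" unfolding C4_def using C3 us0 Ci0 by (auto intro!: add_nonneg_pos)
    define \<delta> where "\<delta> = min (ss / 2) (min (us / (2 * C3)) (min (A / (2 * \<beta>0 * K1 * Ci)) (\<epsilon> / (2 * C4))))"
    have d0: "\<delta> > 0" unfolding \<delta>_def using ss0 us0 C3 C4 K10 Ci0 assms e by auto
    show "\<exists>\<delta>>0. \<forall>y\<in>state_space. dist y (ss, 0) < \<delta> \<longrightarrow>
      (\<forall>x. is_trajectory A \<beta>0 \<sigma> g p T y x \<longrightarrow>
        (\<forall>k::nat. dist (x (real k * T)) (ss, 0) < \<epsilon>) \<and> (\<lambda>k::nat. x (real k * T)) \<longlonglongrightarrow> (ss, 0))"
    proof (intro exI[of _ \<delta>] conjI d0 ballI impI allI)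
      fix y :: "real \<times> real" and x assume y: "y \<in> state_space" "dist y (ss, 0) < \<delta>"
        and tr: "is_trajectory A \<beta>0 \<sigma> g p T y x"
      have i0: "snd y \<ge> 0" using y(1) by (auto simp: state_space_def)
      have ds: "\<bar>fst y - ss\<bar> < \<delta>" using dist_fst_le[of y "(ss, 0)"] y(2) by (simp add: dist_real_def)
      have di: "snd y < \<delta>" using dist_snd_le[of y "(ss, 0)"] y(2) by (simp add: dist_real_def)
      have dss: "\<delta> \<le> ss / 2" unfolding \<delta>_def by simp
      have "ss - fst y \<le> \<bar>fst y - ss\<bar>" by linarith
      then have s0h: "ss / 2 \<le> fst y" using ds dss by linarith
      have s0: "fst y > 0" using s0h ss0 by simp
      define K where "K = \<bar>1 / fst y - us\<bar> + c2 * Ci * snd y / (mu - lam)"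
      have "\<bar>1 / fst y - us\<bar> \<le> 2 * \<bar>fst y - ss\<bar> / ss^2"
        using L6[OF ss0 s0h] unfolding ss_def using us0 by simp
      also have "\<dots> \<le> 2 * \<delta> / ss^2" using ds by (intro divide_right_mono) auto
      finally have a1: "\<bar>1 / fst y - us\<bar> \<le> 2 * \<delta> / ss^2" .
      have a2: "c2 * Ci * snd y / (mu - lam) \<le> c2 * Ci * \<delta> / (mu - lam)"
        using di c20 Ci0 mu by (intro divide_right_mono mult_left_mono) auto
      have KC: "K \<le> C3 * \<delta>" unfolding K_def C3_def using a1 a2 by (simp add: field_simps)
      have "C3 * \<delta> \<le> C3 * (us / (2 * C3))" using C3 unfolding \<delta>_def by (intro mult_left_mono) auto
      then have K2: "K \<le> us / 2" using KC C3 by simp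
      have "\<beta>0 * K1 * Ci * snd y \<le> \<beta>0 * K1 * Ci * \<delta>" using di assms K10 Ci0 by (intro mult_left_mono) auto
      also have "\<dots> \<le> \<beta>0 * K1 * Ci * (A / (2 * \<beta>0 * K1 * Ci))"
        using assms K10 Ci0 unfolding \<delta>_def by (intro mult_left_mono) auto
      also have "\<dots> = A / 2" using assms K10 Ci0 by (simp add: field_simps)
      finally have small: "\<beta>0 * K1 * Ci * snd y \<le> A / 2" .
      have sg: "0 \<le> \<sigma> + g" using assms by simp
      note inv = core[OF tr sg s0 i0 K_def[symmetric, THEN eq_refl] K2 small]
      have inv': "fst (x (real n * T)) > 0 \<and> snd (x (real n * T)) \<ge> 0 \<and>
         \<bar>1 / fst (x (real n * T)) - us\<bar> \<le> K * mu ^ n \<and>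
         snd (x (real n * T)) * fst (x (real n * T)) powr \<beta>0 \<le> rho ^ n * (snd y * fst y powr \<beta>0)" for n
        using inv assms by auto
      have K0: "K \<ge> 0" unfolding K_def using c20 Ci0 i0 mu by auto
      have e0: "\<bar>1 / fst y - us\<bar> \<le> us / 2" using K2 c20 Ci0 i0 mu unfolding K_def
        by (smt (verit) divide_nonneg_pos mult_nonneg_nonneg)
      have rs0: "fst y \<le> 2 / us" using L1[OF s0 e0 us0] by simp
      have bnd: "\<bar>fst (x (real k * T)) - ss\<bar> \<le> 2 * (K * mu ^ k) / us^2 \<and>
                 snd (x (real k * T)) \<le> Ci * rho ^ k * snd y" for k
      proof -
        have mk: "mu ^ k \<le> 1" "mu ^ k \<ge> 0" using mu by (auto intro: power_le_one)
        have "K * mu ^ k \<le> K * 1" using mk K0 by (intro mult_left_mono) auto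
        then have ek: "\<bar>1 / fst (x (real k * T)) - us\<bar> \<le> us / 2" using inv'[of k] K2 by linarith
        have rk: "2 / (3 * us) \<le> fst (x (real k * T)) \<and> fst (x (real k * T)) \<le> 2 / us"
          using L1[OF _ ek us0] inv'[of k] by simp
        have "\<bar>fst (x (real k * T)) - ss\<bar> \<le> 2 * \<bar>1 / fst (x (real k * T)) - us\<bar> / us^2"
          unfolding ss_def using L5[of "fst (x (real k * T))" us] inv'[of k] us0 rk by simp
        also have "\<dots> \<le> 2 * (K * mu ^ k) / us^2" using inv'[of k] by (intro divide_right_mono) auto
        finally have b1: "\<bar>fst (x (real k * T)) - ss\<bar> \<le> 2 * (K * mu ^ k) / us^2" .
        have "3 * fst (x (real k * T)) \<ge> 2 / us" using rk us0 by (simp add: field_simps)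
        then have s03: "fst y \<le> 3 * fst (x (real k * T))" using rs0 by linarith
        have "snd (x (real k * T)) \<le> 3 powr \<beta>0 * rho ^ k * snd y"
          using L2[of "snd (x (real k * T))" "fst (x (real k * T))" "fst y" \<beta>0 "rho ^ k" "snd y"]
            inv'[of k] s0 s03 assms rho0 i0 by simp
        then show ?thesis using b1 unfolding Ci_def by simp
      qed
      show "dist (x (real k * T)) (ss, 0) < \<epsilon>" for k
      proof -
        have mk: "mu ^ k \<le> 1" "mu ^ k \<ge> 0" "rho ^ k \<le> 1" "rho ^ k \<ge> 0" using mu rho0 rho1 by (auto intro: power_le_one)
        have "2 * (K * mu ^ k) / us^2 \<le> 2 * (C3 * \<delta>) / us^2"
        proof -
          have "K * mu ^ k \<le> K * 1" using mk K0 by (intro mult_left_mono) auto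
          then show ?thesis using KC by (intro divide_right_mono) auto
        qed
        then have b1: "\<bar>fst (x (real k * T)) - ss\<bar> \<le> 2 * (C3 * \<delta>) / us^2" using bnd[of k] by linarith
        have "Ci * rho ^ k * snd y \<le> Ci * 1 * \<delta>" using mk Ci0 i0 di by (intro mult_mono mult_left_mono) auto
        then have b2: "\<bar>snd (x (real k * T))\<bar> \<le> Ci * \<delta>" using bnd[of k] inv'[of k] by simp
        have "dist (x (real k * T)) (ss, 0) = sqrt ((fst (x (real k * T)) - ss)^2 + (snd (x (real k * T)))^2)"
          by (subst prod.collapse[symmetric, of "x (real k * T)"], subst dist_Pair_Pair) (simp add: dist_real_def)
        also have "\<dots> \<le> \<bar>fst (x (real k * T)) - ss\<bar> + \<bar>snd (x (real k * T))\<bar>" by (rule sqrt_sum_squares_le_sum_abs)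
        also have "\<dots> \<le> C4 * \<delta>" using b1 b2 unfolding C4_def by (simp add: field_simps)
        also have "\<dots> \<le> C4 * (\<epsilon> / (2 * C4))" using C4 unfolding \<delta>_def by (intro mult_left_mono) auto
        also have "\<dots> < \<epsilon>" using C4 e by simp
        finally show ?thesis .
      qed
      have l1: "(\<lambda>k. \<bar>1 / fst (x (real k * T)) - us\<bar>) \<longlonglongrightarrow> 0"
      proof (rule sandwich0)
        show "(\<lambda>k. K * mu ^ k) \<longlonglongrightarrow> 0" using mu by (intro tendsto_mult_right_zero LIMSEQ_power_zero) auto
      qed (use inv' in auto)
      then have "(\<lambda>k. 1 / fst (x (real k * T)) - us) \<longlonglongrightarrow> 0" by (simp add: tendsto_rabs_zero_iff)
      then have "(\<lambda>k. 1 / fst (x (real k * T)) - us + us) \<longlonglongrightarrow> 0 + us" by (intro tendsto_add) auto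
      then have "(\<lambda>k. inverse (1 / fst (x (real k * T)))) \<longlonglongrightarrow> inverse us"
        using us0 by (intro tendsto_inverse) auto
      then have l1': "(\<lambda>k. fst (x (real k * T))) \<longlonglongrightarrow> ss" unfolding ss_def by (simp add: inverse_eq_divide)
      have l2: "(\<lambda>k. snd (x (real k * T))) \<longlonglongrightarrow> 0"
      proof (rule sandwich0)
        show "(\<lambda>k. Ci * rho ^ k * snd y) \<longlonglongrightarrow> 0" using rho0 rho1
          by (intro tendsto_mult_left_zero tendsto_mult_right_zero LIMSEQ_power_zero) auto
      qed (use inv' bnd in auto)
      show "(\<lambda>k. x (real k * T)) \<longlonglongrightarrow> (ss, 0)" using tendsto_Pair[OF l1' l2] by simp
    qed
  qed
qed


theorem proposition9:
  fixes A \<beta>0 \<sigma> g p T :: real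
  assumes "0 < A" "A \<le> 1" "0 < \<beta>0" "0 \<le> \<sigma>" "0 \<le> g" "0 < \<sigma> + g"
    and "0 \<le> p" "p \<le> 1" "0 < T"
  shows "(p > p1 A T \<longrightarrow> loc_asym_stable A \<beta>0 \<sigma> g p T (0, 0)) \<and>
         (p2 A \<beta>0 \<sigma> g T < p \<and> p < p1 A T \<longrightarrow>
            loc_asym_stable A \<beta>0 \<sigma> g p T (Sper A p T 0, 0))"
proof (intro conjI impI)
  assume "p > p1 A T"
  then show "loc_asym_stable A \<beta>0 \<sigma> g p T (0, 0)" using part1[OF assms] by blast
next
  assume "p2 A \<beta>0 \<sigma> g T < p \<and> p < p1 A T"
  then show "loc_asym_stable A \<beta>0 \<sigma> g p T (Sper A p T 0, 0)" using part2[OF assms] by blast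
qed

end
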